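(* Let $\alpha\in[0,1]$ and let $F$ be the space of weakly increasing functions from $[0,1]$ to $[0,1]$, equipped with the uniform norm. The functional $\phi:F\to[0,1]$ given by \[ \phi(f)=\inf_{0\le x<1}\frac{1-f(x\alpha)}{1-x} \] is continuous at every $f\in F$ with $f(\alpha)<1$. *)

theory Defs
  imports "HOL-Analysis.Analysis"
begin

text \<open>The space F: weakly increasing functions from [0,1] to [0,1]
  (represented as real functions; only their values on [0,1] matter).\<close>
definition Fspace :: "(real \<Rightarrow> real) set" where
  "Fspace = {f. mono_on {0..1} f \<and> (\<forall>x\<in>{0..1}. f x \<in> {0..1})}"

definition udist :: "(real \<Rightarrow> real) \<Rightarrow> (real \<Rightarrow> real) \<Rightarrow> real" where
  "udist f g = (SUP x\<in>{0..1}. \<bar>f x - g x\<bar>)"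

definition phi :: "real \<Rightarrow> (real \<Rightarrow> real) \<Rightarrow> real" where
  "phi \<alpha> f = (INF x\<in>{0..<1}. (1 - f (x * \<alpha>)) / (1 - x))"

end

theory Submission
  imports Defs
begin

lemma xa_in: assumes "a \<in> {0..1}" "x \<in> {0..<(1::real)}"
  shows "x * a \<in> {0..1}" "x * a \<le> a"
  using assms by (auto simp: mult_le_one mult_left_le_one_le)

lemma phi_le1:
  assumes "h \<in> Fspace" "a \<in> {0..1}"
  shows "phi a h \<le> 1" "bdd_below ((\<lambda>x. (1 - h (x * a)) / (1 - x)) ` {0..<1})"
proof -
  show b: "bdd_below ((\<lambda>x. (1 - h (x * a)) / (1 - x)) ` {0..<1})"
  proof (rule bdd_belowI2[where m=0])
    fix x :: real assume x: "x \<in> {0..<1}"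
    then have "h (x*a) \<le> 1" using assms xa_in[OF assms(2) x] unfolding Fspace_def by auto
    then show "0 \<le> (1 - h (x * a)) / (1 - x)" using x by auto
  qed
  have "phi a h \<le> (1 - h (0 * a)) / (1 - 0)"
    unfolding phi_def by (rule cINF_lower[OF b]) auto
  also have "\<dots> \<le> 1" using assms unfolding Fspace_def by auto
  finally show "phi a h \<le> 1" .
qed

lemma phi_lower:
  assumes h1: "h1 \<in> Fspace" and h2: "h2 \<in> Fspace" and a: "a \<in> {0..1}"
    and d: "\<And>y. y \<in> {0..1} \<Longrightarrow> \<bar>h1 y - h2 y\<bar> \<le> d"
    and c: "c > 0" "\<And>x. x \<in> {0..<1} \<Longrightarrow> 1 - h1 (x * a) \<ge> c"
  shows "phi a h1 \<ge> phi a h2 - d / c"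
  unfolding phi_def
proof (rule cINF_greatest)
  show "{0..<1::real} \<noteq> {}" by auto
  fix x :: real assume x: "x \<in> {0..<1}"
  have p1: "phi a h2 \<le> 1" using phi_le1[OF h2 a] by auto
  have dnn: "d \<ge> 0" using d[of 0] by auto
  have xpos: "1 - x > 0" using x by auto
  show "(INF x\<in>{0..<1}. (1 - h2 (x * a)) / (1 - x)) - d / c \<le> (1 - h1 (x * a)) / (1 - x)"
  proof (cases "1 - x \<le> c")
    case True
    have "1 \<le> c / (1 - x)" using True xpos by (simp add: field_simps)
    also have "\<dots> \<le> (1 - h1 (x * a)) / (1 - x)"
      using c(2)[OF x] xpos by (simp add: divide_right_mono)
    finally show ?thesis using p1 dnn c(1) unfolding phi_def
      by (smt (verit) divide_nonneg_pos)
  next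
    case False
    have l: "(INF x\<in>{0..<1}. (1 - h2 (x * a)) / (1 - x)) \<le> (1 - h2 (x * a)) / (1 - x)"
      by (rule cINF_lower[OF phi_le1(2)[OF h2 a] x])
    have dd: "\<bar>h1 (x*a) - h2 (x*a)\<bar> \<le> d" using d xa_in[OF a x] by auto
    have "(1 - h2 (x * a)) / (1 - x) - (1 - h1 (x * a)) / (1 - x) = (h1 (x*a) - h2 (x*a)) / (1 - x)"
      using xpos by (simp add: diff_divide_distrib[symmetric])
    also have "\<dots> \<le> d / (1 - x)" using dd xpos by (simp add: divide_right_mono)
    also have "\<dots> \<le> d / c" using False dnn c(1) by (simp add: divide_left_mono)
    finally show ?thesis using l by linarith
  qed
qed

theorem lemma7:
  fixes \<alpha> :: real and f :: "real \<Rightarrow> real"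
  assumes "\<alpha> \<in> {0..1}" and "f \<in> Fspace" and "f \<alpha> < 1"
  shows "\<forall>\<epsilon>>0. \<exists>\<delta>>0. \<forall>g\<in>Fspace. udist g f < \<delta> \<longrightarrow> \<bar>phi \<alpha> g - phi \<alpha> f\<bar> < \<epsilon>"
proof (intro allI impI)
  fix \<epsilon> :: real assume e: "\<epsilon> > 0"
  define c where "c = 1 - f \<alpha>"
  have c: "c > 0" using assms c_def by auto
  define \<delta> where "\<delta> = min (c/2) (\<epsilon> * c / 4)"
  have dp: "\<delta> > 0" using c e by (simp add: \<delta>_def)
  show "\<exists>\<delta>>0. \<forall>g\<in>Fspace. udist g f < \<delta> \<longrightarrow> \<bar>phi \<alpha> g - phi \<alpha> f\<bar> < \<epsilon>"
  proof (intro exI[of _ \<delta>] conjI ballI impI dp)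
    fix g assume g: "g \<in> Fspace" and u: "udist g f < \<delta>"
    define d where "d = udist g f"
    have bd: "bdd_above ((\<lambda>x. \<bar>g x - f x\<bar>) ` {0..1})"
      by (rule bdd_aboveI2[where M=1])
         (use g assms(2) in \<open>unfold Fspace_def, fastforce simp: abs_le_iff\<close>)
    have d: "\<And>y. y \<in> {0..1} \<Longrightarrow> \<bar>g y - f y\<bar> \<le> d"
      unfolding d_def udist_def by (rule cSUP_upper[OF _ bd])
    have d': "\<And>y. y \<in> {0..1} \<Longrightarrow> \<bar>f y - g y\<bar> \<le> d" using d by (simp add: abs_minus_commute)
    have mf: "mono_on {0..1} f" using assms(2) by (simp add: Fspace_def)
    have fx: "\<And>x. x \<in> {0..<1} \<Longrightarrow> 1 - f (x * \<alpha>) \<ge> c"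
    proof -
      fix x :: real assume x: "x \<in> {0..<1}"
      have "f (x*\<alpha>) \<le> f \<alpha>" using mono_onD[OF mf] xa_in[OF assms(1) x] assms(1) by auto
      then show "1 - f (x * \<alpha>) \<ge> c" by (simp add: c_def)
    qed
    have gx: "\<And>x. x \<in> {0..<1} \<Longrightarrow> 1 - g (x * \<alpha>) \<ge> c/2"
    proof -
      fix x :: real assume x: "x \<in> {0..<1}"
      have "\<bar>g (x*\<alpha>) - f (x*\<alpha>)\<bar> \<le> d" using d xa_in[OF assms(1) x] by auto
      moreover have "d < c/2" using u \<delta>_def d_def by auto
      ultimately show "1 - g (x * \<alpha>) \<ge> c/2" using fx[OF x] by linarith
    qed
    have A: "phi \<alpha> g \<ge> phi \<alpha> f - d / (c/2)"
      by (rule phi_lower[OF g assms(2) assms(1) d]) (use c gx in auto)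
    have B: "phi \<alpha> f \<ge> phi \<alpha> g - d / c"
      by (rule phi_lower[OF assms(2) g assms(1) d' c fx])
    have dnn: "d \<ge> 0" using d[of 0] by auto
    have "d / c \<le> d / (c/2)" using dnn c by (simp add: divide_right_mono)
    moreover have "d / (c/2) < \<epsilon>"
    proof -
      have "d < \<epsilon> * c / 4" using u \<delta>_def d_def by auto
      moreover have "\<epsilon> * c > 0" using c e by simp
      ultimately have "2 * d < \<epsilon> * c" by linarith
      then show ?thesis using c by (simp add: field_simps)
    qed
    ultimately show "\<bar>phi \<alpha> g - phi \<alpha> f\<bar> < \<epsilon>" using A B by (simp add: abs_less_iff)
  qed
qed

end
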